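(* Let $L_k>0$, $V_k^{\mathrm d}>0$, $R_k>0$, $t_k>0$, $V_k^{\mathrm c}>0$ and $\beta\in(0,1)$. For $\lambda_k\in[0,1]$ define \[ D_{\mathrm{comp}}^{\mathrm d}=\frac{\lambda_kL_k}{V_k^{\mathrm d}},\quad D_{\mathrm{tran}}^{\mathrm d}=\frac{\beta\lambda_kL_k}{t_kR_k},\quad D_{\mathrm{tran}}^{\mathrm c}=\frac{(1-\lambda_k)L_k}{t_kR_k},\quad D_{\mathrm{comp}}^{\mathrm c}=\frac{(1-\lambda_k)L_k}{V_k^{\mathrm c}}, \] and \[ D_k(\lambda_k)=\begin{cases}\max\{D_{\mathrm{comp}}^{\mathrm d}+D_{\mathrm{tran}}^{\mathrm d},\ D_{\mathrm{tran}}^{\mathrm c}+D_{\mathrm{comp}}^{\mathrm c}\}, & \text{if } D_{\mathrm{comp}}^{\mathrm d}\ge D_{\mathrm{tran}}^{\mathrm c},\\ D_{\mathrm{tran}}^{\mathrm c}+\max\{D_{\mathrm{tran}}^{\mathrm d},\ D_{\mathrm{comp}}^{\mathrm c}\}, & \text{if } D_{\mathrm{comp}}^{\mathrm d}< D_{\mathrm{tran}}^{\mathrm c}.\end{cases} \] Then a minimizer $\lambda_k^*$ of $D_k(\lambda_k)$ over $\lambda_k\in[0,1]$ is \[ \lambda_k^*=\begin{cases}\dfrac{V_k^{\mathrm d}(t_kR_k+V_k^{\mathrm c})}{V_k^{\mathrm d}V_k^{\mathrm c}(1+\beta)+t_kR_k(V_k^{\mathrm d}+V_k^{\mathrm c})},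 & \text{if } t_kR_k\ge\sqrt{\beta V_k^{\mathrm d}V_k^{\mathrm c}},\\[2ex] \dfrac{V_k^{\mathrm d}}{V_k^{\mathrm d}+t_kR_k}, & \text{if } t_kR_k<\sqrt{\beta V_k^{\mathrm d}V_k^{\mathrm c}}.\end{cases} \]
   Context: Partial compression offloading model: device $k$ compresses a fraction $\lambda_k$ of its $L_k$ raw bits locally at speed $V_k^{\mathrm d}$ and transmits the compressed $\beta\lambda_kL_k$ bits; the remaining $(1-\lambda_k)L_k$ raw bits are transmitted (average rate $t_kR_k$, where $t_k$ is the TDMA time fraction and $R_k$ the average channel rate) and compressed at the edge cloud with allocated speed $V_k^{\mathrm c}$; $\beta$ is the compression ratio. The channel carries only one of the two transmissions at a time, which gives the end-to-end delay $D_k(\lambda_k)$ above. *)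

theory Defs
  imports Complex_Main
begin

text \<open>Parameters: L (raw bits), Vd (device compression speed), t (TDMA fraction),
  R (average rate), Vc (edge compression speed), beta (compression ratio),
  lam (fraction compressed locally).\<close>

definition delay :: "real \<Rightarrow> real \<Rightarrow> real \<Rightarrow> real \<Rightarrow> real \<Rightarrow> real \<Rightarrow> real \<Rightarrow> real" where
  "delay L Vd t R Vc beta lam =
    (let Dcd = lam * L / Vd;
         Dtd = beta * lam * L / (t * R);
         Dtc = (1 - lam) * L / (t * R);
         Dcc = (1 - lam) * L / Vc
     in if Dcd \<ge> Dtc then max (Dcd + Dtd) (Dtc + Dcc)
        else Dtc + max Dtd Dcc)"

definition lam_opt :: "real \<Rightarrow> real \<Rightarrow> real \<Rightarrow> real \<Rightarrow> real \<Rightarrow> real" where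
  "lam_opt Vd t R Vc beta =
    (if t * R \<ge> sqrt (beta * Vd * Vc)
     then Vd * (t * R + Vc) / (Vd * Vc * (1 + beta) + t * R * (Vd + Vc))
     else Vd / (Vd + t * R))"

end

theory Submission
  imports Defs
begin

lemma core:
  fixes A B C D x l :: real
  assumes "A>0" "B>0" "C>0" "D>0" "B<C" "0\<le>l" "l\<le>1"
  and x: "x = (if A*D \<ge> B*C then (C+D)/(A+B+C+D) else C/(A+C))"
  and f: "\<And>l. f l = (if l*A \<ge> (1-l)*C then max (l*A+l*B) ((1-l)*C+(1-l)*D) else (1-l)*C + max (l*B) ((1-l)*D))"
  shows "0 \<le> x \<and> x \<le> 1 \<and> f x \<le> f l"
proof (cases "A*D \<ge> B*C")
  case True
  have xe: "x*(A+B+C+D) = C+D" using x True assms by simp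
  have x0: "0\<le>x" "x\<le>1" using assms(1-5) by (simp_all add: x True divide_le_eq)
  have g: "x*A \<ge> (1-x)*C"
  proof -
    have "(x*(A+C) - C)*(A+B+C+D) = x*(A+B+C+D)*(A+C) - C*(A+B+C+D)" by (simp add: algebra_simps)
    also have "... = (C+D)*(A+C) - C*(A+B+C+D)" using xe by simp
    also have "... = A*D - B*C" by (simp add: algebra_simps)
    finally have "(x*(A+C) - C)*(A+B+C+D) \<ge> 0" using True by simp
    then have "x*(A+C) - C \<ge> 0" using assms(1-4) by (simp add: zero_le_mult_iff)
    then show ?thesis by (simp add: algebra_simps)
  qed
  have e: "x*(A+B) = (1-x)*(C+D)" using xe by (simp add: algebra_simps)
  have fx: "f x = x*(A+B)" using f[of x] g e by (simp add: algebra_simps)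
  show ?thesis
  proof (cases "l \<ge> x")
    case True
    then have "l*A \<ge> (1-l)*C" using g assms x0
      by (smt (verit) mult_right_mono)
    then have "f l \<ge> l*(A+B)" using f[of l] by (simp add: algebra_simps)
    moreover have "l*(A+B) \<ge> x*(A+B)" using True assms by (intro mult_right_mono) auto
    ultimately show ?thesis using fx x0 by simp
  next
    case False
    have "f l \<ge> (1-l)*(C+D)" using f[of l] assms by (auto simp: algebra_simps)
    moreover have "(1-l)*(C+D) \<ge> (1-x)*(C+D)" using False assms by (intro mult_right_mono) auto
    ultimately show ?thesis using fx e x0 by simp
  qed
next
  case False
  have xe: "x*(A+C) = C" using x False assms by simp
  have x0: "0\<le>x" "x\<le>1" using assms(1-5) by (simp_all add: x False divide_le_eq)
  have g: "x*A = (1-x)*C" using xe by (simp add: algebra_simps)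
  have h: "x*B \<ge> (1-x)*D"
  proof -
    have "(x*(B+D) - D)*(A+C) = x*(A+C)*(B+D) - D*(A+C)" by (simp add: algebra_simps)
    also have "... = C*(B+D) - D*(A+C)" using xe by simp
    also have "... = B*C - A*D" by (simp add: algebra_simps)
    finally have "(x*(B+D) - D)*(A+C) \<ge> 0" using False by simp
    then have "x*(B+D) - D \<ge> 0" using assms(1-4) by (simp add: zero_le_mult_iff)
    then show ?thesis by (simp add: algebra_simps)
  qed
  have fx: "f x = (1-x)*C + x*B" using f[of x] g h by (simp add: algebra_simps)
  show ?thesis
  proof (cases "l \<ge> x")
    case True
    then have "l*A \<ge> (1-l)*C" using g assms x0
      by (smt (verit) mult_right_mono)
    then have "f l \<ge> l*(A+B)" using f[of l] by (simp add: algebra_simps)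
    moreover have "l*(A+B) \<ge> x*(A+B)" using True assms by (intro mult_right_mono) auto
    ultimately show ?thesis using fx x0 g by (simp add: algebra_simps)
  next
    case False
    have "f l \<ge> (1-l)*C + l*B" using f[of l] assms by (auto simp: algebra_simps)
    moreover have "(1-l)*C + l*B \<ge> (1-x)*C + x*B"
    proof -
      have "(x-l)*(C-B) \<ge> 0" using False assms by simp
      then show ?thesis by (simp add: algebra_simps)
    qed
    ultimately show ?thesis using fx x0 by simp
  qed
qed

theorem lemma1:
  fixes L Vd R t Vc beta :: real
  assumes "L > 0" and "Vd > 0" and "R > 0" and "t > 0" and "Vc > 0"
    and "0 < beta" and "beta < 1"
  shows "lam_opt Vd t R Vc beta \<in> {0..1} \<and>
         (\<forall>lam \<in> {0..1}. delay L Vd t R Vc beta (lam_opt Vd t R Vc beta)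
                          \<le> delay L Vd t R Vc beta lam)"
proof -
  define A where "A = L/Vd"
  define B where "B = beta*L/(t*R)"
  define C where "C = L/(t*R)"
  define D where "D = L/Vc"
  have tR: "t*R > 0" using assms by simp
  have pos: "A>0" "B>0" "C>0" "D>0" using assms tR by (simp_all add: A_def B_def C_def D_def)
  have BC: "B<C" using assms tR by (simp add: B_def C_def divide_strict_right_mono)
  have dl: "delay L Vd t R Vc beta l = (if l*A \<ge> (1-l)*C then max (l*A+l*B) ((1-l)*C+(1-l)*D) else (1-l)*C + max (l*B) ((1-l)*D))" for l
    by (simp add: delay_def Let_def A_def B_def C_def D_def algebra_simps)
  have cond: "(t*R \<ge> sqrt (beta*Vd*Vc)) = (A*D \<ge> B*C)"
  proof -
    have "(t*R \<ge> sqrt (beta*Vd*Vc)) = (beta*Vd*Vc \<le> (t*R)^2)"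
      using tR assms by (metis less_imp_le real_le_lsqrt real_sqrt_le_iff real_sqrt_unique zero_le_mult_iff less_eq_real_def power2_eq_square real_sqrt_pow2 sqrt_le_D mult_pos_pos)
    also have "... = (A*D \<ge> B*C)"
      using assms tR by (simp add: A_def B_def C_def D_def divide_simps power2_eq_square, simp add: algebra_simps)
    finally show ?thesis .
  qed
  have lo1: "Vd * (t * R + Vc) / (Vd * Vc * (1 + beta) + t * R * (Vd + Vc)) = (C+D)/(A+B+C+D)"
  proof -
    define k where "k = Vd*Vc*(t*R)/L"
    have k0: "k \<noteq> 0" using assms tR by (simp add: k_def)
    have e1: "(C+D)*k = Vd * (t * R + Vc)" using assms tR by (simp add: k_def C_def D_def field_simps)
    have e2: "(A+B+C+D)*k = Vd * Vc * (1 + beta) + t * R * (Vd + Vc)" using assms tR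
      by (simp add: k_def A_def B_def C_def D_def field_simps)
    have "(C+D)/(A+B+C+D) = ((C+D)*k)/((A+B+C+D)*k)" using k0 by simp
    then show ?thesis by (simp only: e1 e2)
  qed
  have lo2: "Vd / (Vd + t * R) = C/(A+C)"
  proof -
    define k where "k = Vd*(t*R)/L"
    have k0: "k \<noteq> 0" using assms tR by (simp add: k_def)
    have e1: "C*k = Vd" using assms tR by (simp add: k_def C_def field_simps)
    have e2: "(A+C)*k = Vd + t*R" using assms tR by (simp add: k_def A_def C_def field_simps)
    have "C/(A+C) = (C*k)/((A+C)*k)" using k0 by simp
    then show ?thesis by (simp only: e1 e2)
  qed
  have x: "lam_opt Vd t R Vc beta = (if A*D \<ge> B*C then (C+D)/(A+B+C+D) else C/(A+C))"
    unfolding lam_opt_def cond lo1 lo2 by simp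
  show ?thesis
    using core[OF pos BC _ _ x dl] core[OF pos BC _ _ x dl, of 0] by auto
qed

end
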